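(* Let $d\ge1$, $z\ge0$, let $0<\varphi_1\le\cdots\le\varphi_d$ and let $\tilde v_1,\ldots,\tilde v_d\in\mathbb C$ be nonzero; set $\varphi_0=z$ and $\varphi_{d+1}=+\infty$. For $\lambda>0$ with $\lambda\notin\{\varphi_1,\dots,\varphi_d\}$ define $$f(\lambda)=\lambda^2\sum_{m=1}^d\frac{\varphi_m|\tilde v_m|^2}{(\lambda-\varphi_m)^2}-\lambda+z,\qquad g(\lambda)=1-\sum_{m=1}^d\frac{\varphi_m|\tilde v_m|^2}{\lambda-\varphi_m}-\frac{z}{\lambda}-\log\lambda.$$ Let $L\in\{1,\ldots,d\}$ and $K\in\{0,\ldots,d-L\}$, and let $\lambda_1\in(\varphi_{L-1},\varphi_L)$ and $\lambda_2\in(\varphi_{L+K},\varphi_{L+K+1})$ satisfy $f(\lambda_1)=f(\lambda_2)=0$. Then $g(\lambda_1)\ge g(\lambda_2)$.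
   Context: Standing assumption of the paper for this lemma: all indices belong to the support $\mathcal S=\{m:\varphi_m|\tilde v_m|^2\ne0\}$, i.e. $\mathcal S=\{1,\ldots,d\}$. Here $\varphi_m$ are the eigenvalues of a Hermitian positive semi-definite matrix and $\tilde v_m$ the coordinates of a vector in its eigenbasis (this interpretation is not needed for the statement). *)

theory Defs
  imports Complex_Main
begin

definition f_fun :: "nat \<Rightarrow> (nat \<Rightarrow> real) \<Rightarrow> (nat \<Rightarrow> complex) \<Rightarrow> real \<Rightarrow> real \<Rightarrow> real" where
  "f_fun d phi v z lam =
     lam^2 * (\<Sum>m=1..d. phi m * (cmod (v m))^2 / (lam - phi m)^2) - lam + z"

definition g_fun :: "nat \<Rightarrow> (nat \<Rightarrow> real) \<Rightarrow> (nat \<Rightarrow> complex) \<Rightarrow> real \<Rightarrow> real \<Rightarrow> real" where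
  "g_fun d phi v z lam =
     1 - (\<Sum>m=1..d. phi m * (cmod (v m))^2 / (lam - phi m)) - z / lam - ln lam"

text \<open>Extended eigenvalue sequence with phi_0 = z (phi_(d+1) = +infinity is handled
  by omitting the upper bound).\<close>
definition phi_ext :: "real \<Rightarrow> (nat \<Rightarrow> real) \<Rightarrow> nat \<Rightarrow> real" where
  "phi_ext z phi m = (if m = 0 then z else phi m)"

end

theory Submission
  imports Defs
begin

lemma ln_ineq:
  fixes t :: real assumes "1 \<le> t"
  shows "2 * (t - 1) / (t + 1) \<le> ln t"
proof -
  let ?h = "\<lambda>t::real. ln t - 2 * (t - 1) / (t + 1)"
  have der: "\<And>x. 1 \<le> x \<Longrightarrow> (?h has_real_derivative (1/x - 4 / (x+1)^2)) (at x)"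
  proof -
    fix x :: real assume x: "1 \<le> x"
    have "((\<lambda>t. 2 * (t - 1) / (t + 1)) has_real_derivative
          ((2 * (x + 1) - 2 * (x - 1) * 1) / (x + 1)^2)) (at x)"
      using x by (auto intro!: derivative_eq_intros simp: power2_eq_square)
    moreover have "(2 * (x + 1) - 2 * (x - 1) * 1) / (x + 1)^2 = 4 / (x+1)^2"
      by (simp add: algebra_simps)
    ultimately have d2: "((\<lambda>t. 2 * (t - 1) / (t + 1)) has_real_derivative 4 / (x+1)^2) (at x)"
      by simp
    have d1: "(ln has_real_derivative 1/x) (at x)" using x by (auto intro!: derivative_eq_intros)
    show "(?h has_real_derivative (1/x - 4 / (x+1)^2)) (at x)"
      using DERIV_diff[OF d1 d2] .
  qed
  have nn: "\<And>x::real. 1 \<le> x \<Longrightarrow> 0 \<le> 1/x - 4 / (x+1)^2"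
  proof -
    fix x :: real assume x: "1 \<le> x"
    have "0 \<le> (x - 1)^2" by simp
    then have "4 * x \<le> (x+1)^2" by (simp add: power2_eq_square algebra_simps)
    then have "4 / (x+1)^2 \<le> 1/x" using x by (simp add: divide_simps)
    then show "0 \<le> 1/x - 4 / (x+1)^2" by simp
  qed
  have "?h 1 \<le> ?h t"
    by (rule DERIV_nonneg_imp_nondecreasing[OF assms]) (use der nn in blast)
  then show ?thesis by simp
qed

lemma term_ineq:
  fixes a p l1 l2 :: real
  assumes "0 \<le> a" "0 \<le> p" "0 < l1" "l1 < l2"
  shows "a / (l1 - p) - a / (l2 - p) \<le>
     ((l2 - l1) * l1 / (l1 + l2)) * (a / (l1 - p)^2) + ((l2 - l1) * l2 / (l1 + l2)) * (a / (l2 - p)^2)"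
proof (cases "l1 = p")
  case True
  have "a / (l1 - p) - a / (l2 - p) \<le> 0" using True assms by simp
  moreover have "0 \<le> ((l2 - l1) * l1 / (l1 + l2)) * (a / (l1 - p)^2) + ((l2 - l1) * l2 / (l1 + l2)) * (a / (l2 - p)^2)"
    using assms by (intro add_nonneg_nonneg mult_nonneg_nonneg divide_nonneg_nonneg) auto
  ultimately show ?thesis by linarith
next
  case n1: False
  show ?thesis
  proof (cases "l2 = p")
    case True
    have "a / (l1 - p) - a / (l2 - p) \<le> 0" using True assms
      by (simp add: divide_nonpos_neg divide_nonneg_neg)
    moreover have "0 \<le> ((l2 - l1) * l1 / (l1 + l2)) * (a / (l1 - p)^2) + ((l2 - l1) * l2 / (l1 + l2)) * (a / (l2 - p)^2)"
      using assms by (intro add_nonneg_nonneg mult_nonneg_nonneg divide_nonneg_nonneg) auto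
    ultimately show ?thesis by linarith
  next
    case n2: False
    define x where "x = l1 - p"
    define y where "y = l2 - p"
    have x0: "x \<noteq> 0" and y0: "y \<noteq> 0" using n1 n2 by (auto simp: x_def y_def)
    have s: "l1 + l2 > 0" using assms by simp
    have key: "l1 * y^2 + l2 * x^2 - (l1 + l2) * x * y = (l2 - l1)^2 * p"
      unfolding x_def y_def by (simp add: algebra_simps power2_eq_square)
    have gen0: "\<And>X Y S. X \<noteq> 0 \<Longrightarrow> Y \<noteq> 0 \<Longrightarrow> S \<noteq> 0 \<Longrightarrow>
       ((Y - X) * l1 / S) * (a / X^2) + ((Y - X) * l2 / S) * (a / Y^2)
        - (a / X - a / Y) = a * (Y - X) * (l1 * Y^2 + l2 * X^2 - S * X * Y) / (S * X^2 * Y^2)"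
      by (simp add: field_simps power2_eq_square)
    have gen: "\<And>X Y. X \<noteq> 0 \<Longrightarrow> Y \<noteq> 0 \<Longrightarrow>
       ((Y - X) * l1 / (l1 + l2)) * (a / X^2) + ((Y - X) * l2 / (l1 + l2)) * (a / Y^2)
        - (a / X - a / Y) = a * (Y - X) * (l1 * Y^2 + l2 * X^2 - (l1 + l2) * X * Y) / ((l1 + l2) * X^2 * Y^2)"
      using gen0 s by simp
    have yx: "l2 - l1 = y - x" unfolding x_def y_def by simp
    have eq: "((l2 - l1) * l1 / (l1 + l2)) * (a / x^2) + ((l2 - l1) * l2 / (l1 + l2)) * (a / y^2)
        - (a / x - a / y) = a * (l2 - l1) * ((l2 - l1)^2 * p) / ((l1 + l2) * x^2 * y^2)"
      unfolding yx using gen[OF x0 y0] key[unfolded yx] by simp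
    have "a * (l2 - l1) * ((l2 - l1)^2 * p) / ((l1 + l2) * x^2 * y^2) \<ge> 0"
      using assms s by (intro divide_nonneg_nonneg mult_nonneg_nonneg) auto
    then show ?thesis using eq unfolding x_def y_def by linarith
  qed
qed


theorem lemma5:
  fixes d L K :: nat and z l1 l2 :: real
    and phi :: "nat \<Rightarrow> real" and v :: "nat \<Rightarrow> complex"
  assumes "d \<ge> 1" and "z \<ge> 0" and "0 < phi 1"
    and "\<forall>m. 1 \<le> m \<and> m < d \<longrightarrow> phi m \<le> phi (Suc m)"
    and "\<forall>m\<in>{1..d}. v m \<noteq> 0"
    and "1 \<le> L" and "L \<le> d" and "K \<le> d - L"
    and "phi_ext z phi (L - 1) < l1" and "l1 < phi L"
    and "phi_ext z phi (L + K) < l2" and "L + K < d \<longrightarrow> l2 < phi (L + K + 1)"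
    and "f_fun d phi v z l1 = 0" and "f_fun d phi v z l2 = 0"
  shows "g_fun d phi v z l1 \<ge> g_fun d phi v z l2"
proof -
  have mono: "1 \<le> i \<Longrightarrow> i \<le> j \<Longrightarrow> j \<le> d \<Longrightarrow> phi i \<le> phi j" for i j
  proof (induction j)
    case 0 then show ?case by simp
  next
    case (Suc j)
    show ?case
    proof (cases "i = Suc j")
      case True then show ?thesis by simp
    next
      case False
      then have "i \<le> j" using Suc by simp
      then have "phi i \<le> phi j" using Suc by simp
      moreover have "phi j \<le> phi (Suc j)" using assms(4) Suc \<open>i \<le> j\<close> by auto
      ultimately show ?thesis by simp
    qed
  qed
  have pos: "m \<in> {1..d} \<Longrightarrow> 0 < phi m" for m
    using mono[of 1 m] assms(3) by auto
  have l1pos: "0 < l1"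
  proof (cases "L = 1")
    case True then show ?thesis using assms(9) assms(2) by (simp add: phi_ext_def)
  next
    case False
    then have "L - 1 \<in> {1..d}" using assms(6,7) by auto
    then have "0 < phi (L - 1)" by (rule pos)
    then show ?thesis using assms(9) False assms(6) by (simp add: phi_ext_def)
  qed
  have lt: "l1 < l2"
  proof -
    have "L + K \<noteq> 0" using assms(6) by simp
    then have "phi_ext z phi (L + K) = phi (L + K)" unfolding phi_ext_def by (simp only: if_False)
    moreover have "phi L \<le> phi (L + K)" using mono[of L "L + K"] assms(6,7,8) by simp
    ultimately show ?thesis using assms(10,11) by simp
  qed
  have l2pos: "0 < l2" using l1pos lt by simp
  define a where "a m = phi m * (cmod (v m))^2" for m
  have a0: "m \<in> {1..d} \<Longrightarrow> 0 \<le> a m" for m using pos[of m] by (simp add: a_def)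
  define S1 where "S1 = (\<Sum>m=1..d. a m / (l1 - phi m)^2)"
  define S2 where "S2 = (\<Sum>m=1..d. a m / (l2 - phi m)^2)"
  have f1: "l1^2 * S1 - l1 + z = 0" using assms(13) by (simp add: f_fun_def S1_def a_def)
  have f2: "l2^2 * S2 - l2 + z = 0" using assms(14) by (simp add: f_fun_def S2_def a_def)
  have S1e: "S1 = (l1 - z) / l1^2" using f1 l1pos by (simp add: field_simps)
  have S2e: "S2 = (l2 - z) / l2^2" using f2 l2pos by (simp add: field_simps)
  define al where "al = (l2 - l1) * l1 / (l1 + l2)"
  define be where "be = (l2 - l1) * l2 / (l1 + l2)"
  have "(\<Sum>m=1..d. a m / (l1 - phi m)) - (\<Sum>m=1..d. a m / (l2 - phi m))
      = (\<Sum>m=1..d. a m / (l1 - phi m) - a m / (l2 - phi m))"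
    by (simp add: sum_subtractf)
  also have "\<dots> \<le> (\<Sum>m=1..d. al * (a m / (l1 - phi m)^2) + be * (a m / (l2 - phi m)^2))"
    apply (rule sum_mono)
    unfolding al_def be_def
    apply (rule term_ineq)
    using a0 pos l1pos lt by (auto simp: less_imp_le)
  also have "\<dots> = al * S1 + be * S2"
    by (simp add: S1_def S2_def sum.distrib sum_distrib_left)
  finally have ineq: "(\<Sum>m=1..d. a m / (l1 - phi m)) - (\<Sum>m=1..d. a m / (l2 - phi m))
      \<le> al * S1 + be * S2" .
  have alg0: "\<And>Q. Q = l1 + l2 \<Longrightarrow> (l2 - l1) * l1 / Q * ((l1 - z) / l1^2) + (l2 - l1) * l2 / Q * ((l2 - z) / l2^2) + z / l1 - z / l2 = 2 * (l2 / l1 - 1) / (l2 / l1 + 1)"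
proof -
  fix Q :: real assume Q: "Q = l1 + l2"
  note l = l1pos l2pos
  have q: "Q \<noteq> 0" using Q l by auto
  have a1: "l2 / l1 - 1 = (l2 - l1) / l1" "l2 / l1 + 1 = Q / l1" using l Q by (simp_all add: field_simps)
  have r: "2 * (l2 / l1 - 1) / (l2 / l1 + 1) = 2 * (l2 - l1) / Q" unfolding a1 using l q by simp
  have "(l2 - l1) * l1 / Q * ((l1 - z) / l1^2) + (l2 - l1) * l2 / Q * ((l2 - z) / l2^2) + z / l1 - z / l2
     = ((l2 - l1) * l1 * (l1 - z) * l2^2 + (l2 - l1) * l2 * (l2 - z) * l1^2 + z * Q * l1 * l2^2 - z * Q * l1^2 * l2) / (Q * l1^2 * l2^2)"
    using l q by (simp add: field_simps power2_eq_square)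
  also have "\<dots> = 2 * (l2 - l1) * (l1^2 * l2^2) / (Q * l1^2 * l2^2)"
    unfolding Q by (simp add: algebra_simps power2_eq_square)
  also have "\<dots> = 2 * (l2 - l1) / Q" using l by simp
  finally show "(l2 - l1) * l1 / Q * ((l1 - z) / l1^2) + (l2 - l1) * l2 / Q * ((l2 - z) / l2^2) + z / l1 - z / l2 = 2 * (l2 / l1 - 1) / (l2 / l1 + 1)"
    unfolding r .
qed
  have alg: "al * S1 + be * S2 + z / l1 - z / l2 = 2 * (l2 / l1 - 1) / (l2 / l1 + 1)"
    unfolding S1e S2e al_def be_def by (rule alg0) simp
  have lnq: "2 * (l2 / l1 - 1) / (l2 / l1 + 1) \<le> ln (l2 / l1)"
    using ln_ineq[of "l2 / l1"] lt l1pos by simp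
  have "ln (l2 / l1) = ln l2 - ln l1" using l1pos l2pos by (simp add: ln_div)
  then show ?thesis using ineq alg lnq
    by (simp add: g_fun_def a_def)
qed

end
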